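(* Let $n$ be a non-negative integer and $r,s\in\mathbb{C}\setminus\mathbb{Z}^{-}$ with $s\neq0$ and $r-s\notin\mathbb{Z}^{-}$. Then \[ \sum_{k=0}^{n}(-1)^{k+1}2^{2k}\frac{\binom{n+k}{n-k}}{(k+s)\binom{k+r}{k+s}}H_{k+r}=\sum_{k=0}^{n}(-1)^{n-k}\frac{\binom{2n+1}{2k+1}}{(n-k+s)\binom{n+r}{n-k+s}}\left(H_{k+r-s}-H_{n+r}-H_{r-s}\right). \]
   Context: $\mathbb{Z}^{-}$ denotes the set of negative integers. For complex $z$ not a negative integer, $H_z=\psi(z+1)+\gamma$ ($\psi$ the digamma function, $\gamma$ Euler's constant). Binomial coefficients with complex entries: $\binom{x}{y}=\frac{\Gamma(x+1)}{\Gamma(y+1)\Gamma(x-y+1)}$. *)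

theory Defs
  imports "HOL-Analysis.Analysis"
begin

text \<open>Generalised harmonic number H_z = psi(z+1) + gamma.\<close>
definition Hc :: "complex \<Rightarrow> complex" where
  "Hc z = Digamma (z + 1) + euler_mascheroni"

definition cbinom :: "complex \<Rightarrow> complex \<Rightarrow> complex" where
  "cbinom x y = Gamma (x + 1) / (Gamma (y + 1) * Gamma (x - y + 1))"

definition neg_int :: "complex \<Rightarrow> bool" where
  "neg_int z \<longleftrightarrow> (\<exists>m::nat. z = - of_nat (Suc m))"

end

theory Submission
  imports Defs
begin



definition ff :: "nat \<Rightarrow> complex \<Rightarrow> complex \<Rightarrow> complex" where
  "ff n z w = (\<Sum>k\<le>n. of_nat ((n+k) choose (2*k)) * z^k * w^(n-k))"
definition gg :: "nat \<Rightarrow> complex \<Rightarrow> complex \<Rightarrow> complex" where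
  "gg n z w = (\<Sum>k\<le>n. of_nat ((n+k+1) choose (2*k+1)) * z^k * w^(n-k))"

lemma pascal2: "(Suc n + Suc i) choose (2 * Suc i) = ((n+i+1) choose (2*i+2)) + ((n+i+1) choose (2*i+1))"
proof -
  have "Suc n + Suc i = Suc (n+i+1)" "2 * Suc i = Suc (2*i+1)" by simp_all
  then show ?thesis by (simp only: binomial_Suc_Suc) simp
qed

lemma ff_Suc: "ff (Suc n) z w = w * ff n z w + z * gg n z w"
proof -
  have A0: "ff (Suc n) z w = w^(Suc n) + (\<Sum>i\<le>n. of_nat ((Suc n + Suc i) choose (2 * Suc i)) * z^(Suc i) * w^(Suc n - Suc i))"
    unfolding ff_def by (subst sum.atMost_Suc_shift) simp
  also have "\<dots> = w^(Suc n) + (\<Sum>i\<le>n. of_nat ((n+i+1) choose (2*i+2)) * z^(Suc i) * w^(n-i))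
     + (\<Sum>i\<le>n. of_nat ((n+i+1) choose (2*i+1)) * z^(Suc i) * w^(n-i))"
    by (simp only: pascal2 of_nat_add distrib_right sum.distrib diff_Suc_Suc add.assoc)
  also have "(\<Sum>i\<le>n. of_nat ((n+i+1) choose (2*i+1)) * z^(Suc i) * w^(n-i)) = z * gg n z w"
    unfolding gg_def sum_distrib_left by (rule sum.cong) auto
  finally have A: "ff (Suc n) z w = w^(Suc n) + (\<Sum>i\<le>n. of_nat ((n+i+1) choose (2*i+2)) * z^(Suc i) * w^(n-i)) + z * gg n z w" .
  have B0: "w * ff n z w = (\<Sum>k\<le>Suc n. of_nat ((n+k) choose (2*k)) * z^k * w^(Suc n-k))"
  proof -
    have z: "(n+Suc n) choose (2*Suc n) = 0" by (rule binomial_eq_0) simp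
    have "(\<Sum>k\<le>Suc n. of_nat ((n+k) choose (2*k)) * z^k * w^(Suc n-k)) = (\<Sum>k\<le>n. of_nat ((n+k) choose (2*k)) * z^k * w^(Suc n-k))"
      by (subst sum.atMost_Suc) (simp only: z of_nat_0 mult_zero_left add_0_right)
    also have "\<dots> = w * ff n z w" unfolding ff_def sum_distrib_left
      by (rule sum.cong) (auto simp: Suc_diff_le)
    finally show ?thesis by simp
  qed
  have B: "w * ff n z w = w^(Suc n) + (\<Sum>i\<le>n. of_nat ((n+i+1) choose (2*i+2)) * z^(Suc i) * w^(n-i))"
    unfolding B0 by (subst sum.atMost_Suc_shift) (simp add: algebra_simps)
  show ?thesis using A B by simp
qed

lemma gg_Suc: "gg (Suc n) z w = ff (Suc n) z w + w * gg n z w"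
proof -
  have B0: "w * gg n z w = (\<Sum>k\<le>Suc n. of_nat ((n+k+1) choose (2*k+1)) * z^k * w^(Suc n-k))"
  proof -
    have z: "(n+Suc n+1) choose (2*Suc n+1) = 0" by (rule binomial_eq_0) simp
    have "(\<Sum>k\<le>Suc n. of_nat ((n+k+1) choose (2*k+1)) * z^k * w^(Suc n-k)) = (\<Sum>k\<le>n. of_nat ((n+k+1) choose (2*k+1)) * z^k * w^(Suc n-k))"
      by (subst sum.atMost_Suc) (simp only: z of_nat_0 mult_zero_left add_0_right)
    also have "\<dots> = w * gg n z w" unfolding gg_def sum_distrib_left
      by (rule sum.cong) (auto simp: Suc_diff_le)
    finally show ?thesis by simp
  qed
  have p: "(Suc n + k + 1) choose (2*k+1) = ((Suc n + k) choose (2*k)) + ((n+k+1) choose (2*k+1))" for k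
  proof -
    have "Suc n + k + 1 = Suc (Suc n + k)" "2*k+1 = Suc (2*k)" "Suc n + k = n+k+1" by simp_all
    then show ?thesis by (simp only: binomial_Suc_Suc)
  qed
  show ?thesis unfolding B0 unfolding ff_def gg_def
    by (simp only: p of_nat_add distrib_right sum.distrib)
qed


lemma alg1: fixes x P Q :: complex shows "(1-x^2)*((P+Q)/2) + x*((1+x)*P-(1-x)*Q) = ((1+x)^2*P + (1-x)^2*Q)/2"
  by (simp add: field_simps power2_eq_square)
lemma alg2: fixes x P Q :: complex shows "4*x*(((1+x)^2*P + (1-x)^2*Q)/2) + (1-x^2)*((1+x)*P-(1-x)*Q) = (1+x)^3*P - (1-x)^3*Q"
  by (simp add: field_simps power2_eq_square power3_eq_cube)

lemma ff_closed: "ff n (4*x^2) (1-x^2) = ((1+x)^(2*n+1) + (1-x)^(2*n+1))/2 \<and>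
   4*x*gg n (4*x^2) (1-x^2) = (1+x)^(2*n+2) - (1-x)^(2*n+2)"
proof (induction n)
  case 0
  then show ?case by (simp add: ff_def gg_def algebra_simps power2_eq_square)
next
  case (Suc n)
  define P where "P = (1+x)^(2*n+1)"
  define Q where "Q = (1-x)^(2*n+1)"
  have f: "ff n (4*x^2) (1-x^2) = (P + Q)/2" using conjunct1[OF Suc.IH] by (simp only: P_def Q_def)
  have e0: "(1+x)^(2*n+2) = (1+x)*P" "(1-x)^(2*n+2) = (1-x)*Q"
    unfolding P_def Q_def by simp_all
  have g: "4*x*gg n (4*x^2) (1-x^2) = (1+x)*P - (1-x)*Q"
    using conjunct2[OF Suc.IH] by (simp only: e0)
  have e1: "(1+x)^(2*Suc n+1) = (1+x)^2 * P" "(1-x)^(2*Suc n+1) = (1-x)^2 * Q"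
    "(1+x)^(2*Suc n+2) = (1+x)^3 * P" "(1-x)^(2*Suc n+2) = (1-x)^3 * Q"
  proof -
    have "2*Suc n+1 = 2 + (2*n+1)" "2*Suc n+2 = 3 + (2*n+1)" by simp_all
    then show "(1+x)^(2*Suc n+1) = (1+x)^2 * P" "(1-x)^(2*Suc n+1) = (1-x)^2 * Q"
    "(1+x)^(2*Suc n+2) = (1+x)^3 * P" "(1-x)^(2*Suc n+2) = (1-x)^3 * Q"
      unfolding P_def Q_def by (simp_all only: power_add)
  qed
  have F: "ff (Suc n) (4*x^2) (1-x^2) = (1-x^2) * ((P + Q)/2) + x * ((1+x)*P - (1-x)*Q)"
  proof -
    have "ff (Suc n) (4*x^2) (1-x^2) = (1-x^2) * ff n (4*x^2) (1-x^2) + x * (4*x*gg n (4*x^2) (1-x^2))"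
      unfolding ff_Suc by (simp add: power2_eq_square mult_ac)
    then show ?thesis unfolding f g .
  qed
  have F': "ff (Suc n) (4*x^2) (1-x^2) = ((1+x)^(2*Suc n+1) + (1-x)^(2*Suc n+1))/2"
    unfolding F e1 by (rule alg1)
  have G: "4*x*gg (Suc n) (4*x^2) (1-x^2) = 4*x*ff (Suc n) (4*x^2) (1-x^2) + (1-x^2) * ((1+x)*P - (1-x)*Q)"
  proof -
    have "4*x*gg (Suc n) (4*x^2) (1-x^2) = 4*x*ff (Suc n) (4*x^2) (1-x^2) + (1-x^2) * (4*x*gg n (4*x^2) (1-x^2))"
      unfolding gg_Suc by (simp add: distrib_left mult_ac)
    then show ?thesis unfolding g .
  qed
  have G': "4*x*gg (Suc n) (4*x^2) (1-x^2) = (1+x)^(2*Suc n+2) - (1-x)^(2*Suc n+2)"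
    unfolding G F' e1 by (rule alg2)
  show ?case using F' G' by blast
qed

lemma sum_even_odd: fixes h :: "nat \<Rightarrow> 'a::comm_monoid_add" shows "(\<Sum>k<2*n. h k) = (\<Sum>m<n. h (2*m) + h (2*m+1))"
  by (induction n) (simp_all add: sum.lessThan_Suc add.assoc)

lemma even_part:
  fixes x :: complex
  shows "(\<Sum>m\<le>n. of_nat ((2*n+1) choose (2*m)) * x^(2*m)) = ((1+x)^(2*n+1) + (1-x)^(2*n+1))/2"
proof -
  let ?N = "2*n+1"
  have b1: "(1+x)^?N = (\<Sum>k\<le>?N. of_nat (?N choose k) * x^k)"
    using binomial_ring[of x 1 ?N] by (simp add: add.commute)
  have b2: "(1-x)^?N = (\<Sum>k\<le>?N. of_nat (?N choose k) * (-x)^k)"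
    using binomial_ring[of "-x" 1 ?N] by (simp add: add.commute)
  have "(1+x)^?N + (1-x)^?N = (\<Sum>k<2*Suc n. of_nat (?N choose k) * (x^k + (-x)^k))"
    unfolding b1 b2 sum.distrib[symmetric] distrib_left
    by (rule sum.cong) auto
  also have "\<dots> = (\<Sum>m<Suc n. of_nat (?N choose (2*m)) * (2 * x^(2*m)))"
    unfolding sum_even_odd by (rule sum.cong) auto
  finally show ?thesis by (simp add: sum_distrib_left lessThan_Suc_atMost mult_ac)
qed


lemma neg_sq_pow: "(-(x^2))^m = (-1)^m * (x::complex)^(2*m)"
proof -
  have "-(x^2) = (-1) * x^2" by simp
  then show ?thesis by (simp only: power_mult_distrib power_mult)
qed
lemma m1_sq_pow: "(-1::complex)^m * (-1)^m = 1"
proof -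
  have "(-1::complex)^m * (-1)^m = ((-1) * (-1))^m" by (simp only: power_mult_distrib)
  then show ?thesis by simp
qed

lemma stepA:
  fixes X :: complex
  shows "(\<Sum>k\<le>n. of_nat ((n+k) choose (2*k)) * (-4*X)^k * (1+X)^(n-k))
       = (\<Sum>m\<le>n. (-1)^m * of_nat ((2*n+1) choose (2*m)) * X^m)"
proof -
  define x where "x = \<i> * csqrt X"
  have xX: "X = - (x^2)" unfolding x_def by (simp add: power_mult_distrib)
  have "(\<Sum>k\<le>n. of_nat ((n+k) choose (2*k)) * (-4*X)^k * (1+X)^(n-k)) = ff n (4*x^2) (1-x^2)"
  proof -
    have h1: "-4 * -(x^2) = 4*x^2" "1 + -(x^2) = 1 - x^2" by simp_all
    show ?thesis unfolding ff_def xX h1 ..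
  qed
  also have "\<dots> = ((1+x)^(2*n+1) + (1-x)^(2*n+1))/2" using ff_closed by blast
  also have "\<dots> = (\<Sum>m\<le>n. of_nat ((2*n+1) choose (2*m)) * x^(2*m))" by (rule even_part[symmetric])
  also have "\<dots> = (\<Sum>m\<le>n. (-1)^m * of_nat ((2*n+1) choose (2*m)) * X^m)"
    unfolding xX
  proof (rule sum.cong[OF refl])
    fix m
    have "(-1)^m * of_nat ((2*n+1) choose (2*m)) * (-(x^2))^m = ((-1::complex)^m * (-1)^m) * (of_nat ((2*n+1) choose (2*m)) * x^(2*m))"
      unfolding neg_sq_pow by (simp only: mult_ac)
    then have "(-1)^m * of_nat ((2*n+1) choose (2*m)) * (-(x^2))^m = of_nat ((2*n+1) choose (2*m)) * x^(2*m)"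
      by (simp only: m1_sq_pow mult_1_left)
    then show "of_nat ((2*n+1) choose (2*m)) * x^(2*m) = (-1)^m * of_nat ((2*n+1) choose (2*m)) * (-(x^2))^m"
      by (rule sym)
  qed
  finally show ?thesis .
qed

lemma sum_restrict_le:
  fixes h :: "nat \<Rightarrow> 'a::comm_monoid_add"
  assumes "m \<le> n"
  shows "(\<Sum>k\<le>n. if k \<le> m then h k else 0) = (\<Sum>k\<le>m. h k)"
proof -
  have "{..n} \<inter> {k. k \<le> m} = {..m}" using assms by auto
  then show ?thesis using sum.inter_restrict[of "{..n}" h "{k. k \<le> m}"] by simp
qed

lemma swap_tri:
  fixes h :: "nat \<Rightarrow> nat \<Rightarrow> 'a::comm_monoid_add"
  shows "(\<Sum>k\<le>n. \<Sum>m\<le>n. if k \<le> m then h k m else 0) = (\<Sum>m\<le>n. \<Sum>k\<le>m. h k m)"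
  by (subst sum.swap) (rule sum.cong, simp, rule sum_restrict_le, simp)

lemma sum_ge_restrict:
  fixes g :: "nat \<Rightarrow> 'a::comm_monoid_add"
  assumes "k \<le> n"
  shows "(\<Sum>m\<le>n. if k \<le> m then g m else 0) = (\<Sum>j\<le>n-k. g (j+k))"
proof -
  have "{..n} \<inter> {m. k \<le> m} = {k..n}" by auto
  then have "(\<Sum>m\<le>n. if k \<le> m then g m else 0) = sum g {k..n}"
    using sum.inter_restrict[of "{..n}" g "{m. k \<le> m}"] by simp
  also have "\<dots> = sum g {0+k..(n-k)+k}" using assms by simp
  also have "\<dots> = (\<Sum>j=0..n-k. g (j+k))" by (rule sum.shift_bounds_cl_nat_ivl)
  finally show ?thesis by (simp add: atLeast0AtMost)
qed

lemma expand_pow: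
  fixes X :: complex
  assumes "k \<le> n"
  shows "X^k * (1+X)^(n-k) = (\<Sum>m\<le>n. (if k \<le> m then of_nat ((n-k) choose (m-k)) * X^m else 0))"
proof -
  have "(1+X)^(n-k) = (\<Sum>j\<le>n-k. of_nat ((n-k) choose j) * X^j)"
    using binomial_ring[of X 1 "n-k"] by (simp add: add.commute)
  then have "X^k * (1+X)^(n-k) = (\<Sum>j\<le>n-k. of_nat ((n-k) choose j) * X^(j+k))"
    by (simp add: sum_distrib_left power_add mult_ac)
  also have "\<dots> = (\<Sum>m\<le>n. (if k \<le> m then of_nat ((n-k) choose (m-k)) * X^m else 0))"
    using sum_ge_restrict[OF assms, of "\<lambda>m. of_nat ((n-k) choose (m-k)) * X^m"] by simp
  finally show ?thesis .
qed

definition TT :: "nat \<Rightarrow> nat \<Rightarrow> complex" where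
  "TT n m = (\<Sum>k\<le>m. (-4)^k * of_nat ((n+k) choose (2*k)) * of_nat ((n-k) choose (m-k)))"

lemma TT_eq:
  assumes "m \<le> n"
  shows "TT n m = (-1)^m * of_nat ((2*n+1) choose (2*m))"
proof -
  have "(\<Sum>m\<le>n. TT n m * X^m) = (\<Sum>m\<le>n. ((-1)^m * of_nat ((2*n+1) choose (2*m))) * X^m)" for X :: complex
  proof -
    have "(\<Sum>m\<le>n. TT n m * X^m) = (\<Sum>m\<le>n. \<Sum>k\<le>m. (-4)^k * of_nat ((n+k) choose (2*k)) * (of_nat ((n-k) choose (m-k)) * X^m))"
      unfolding TT_def sum_distrib_right by (simp add: mult_ac)
    also have "\<dots> = (\<Sum>k\<le>n. \<Sum>m\<le>n. if k \<le> m then (-4)^k * of_nat ((n+k) choose (2*k)) * (of_nat ((n-k) choose (m-k)) * X^m) else 0)"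
      by (rule swap_tri[symmetric])
    also have "\<dots> = (\<Sum>k\<le>n. (-4)^k * of_nat ((n+k) choose (2*k)) * (X^k * (1+X)^(n-k)))"
      by (rule sum.cong[OF refl], subst expand_pow, simp, simp add: sum_distrib_left, rule sum.cong, auto)
    also have "\<dots> = (\<Sum>k\<le>n. of_nat ((n+k) choose (2*k)) * (-4*X)^k * (1+X)^(n-k))"
      by (rule sum.cong[OF refl]) (simp only: power_mult_distrib mult_ac)
    also have "\<dots> = (\<Sum>m\<le>n. ((-1)^m * of_nat ((2*n+1) choose (2*m))) * X^m)"
      unfolding stepA by (simp add: mult_ac)
    finally show ?thesis .
  qed
  then show ?thesis using polyfun_eq_coeffs[of "TT n" n "\<lambda>m. (-1)^m * of_nat ((2*n+1) choose (2*m))"] assms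
    by blast
qed


lemma poch_expand:
  fixes s \<rho> :: complex
  assumes "k \<le> n"
  shows "pochhammer s k * pochhammer (\<rho> + of_nat k + 1) (n-k)
    = (\<Sum>m\<le>n. if k \<le> m then of_nat ((n-k) choose (m-k)) * (pochhammer s m * pochhammer (\<rho> - s + 1) (n-m)) else 0)"
proof -
  have "\<rho> + of_nat k + 1 = (s + of_nat k) + (\<rho> - s + 1)" by simp
  then have "pochhammer (\<rho> + of_nat k + 1) (n-k) = (\<Sum>j\<le>n-k. of_nat ((n-k) choose j) * pochhammer (s + of_nat k) j * pochhammer (\<rho> - s + 1) (n - k - j))"
    by (simp only: pochhammer_binomial_sum)
  then have "pochhammer s k * pochhammer (\<rho> + of_nat k + 1) (n-k) = (\<Sum>j\<le>n-k. of_nat ((n-k) choose j) * (pochhammer s k * pochhammer (s + of_nat k) j) * pochhammer (\<rho> - s + 1) (n - k - j))"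
    by (simp add: sum_distrib_left mult_ac)
  also have "\<dots> = (\<Sum>j\<le>n-k. of_nat ((n-k) choose ((j+k)-k)) * (pochhammer s (j+k) * pochhammer (\<rho> - s + 1) (n - (j+k))))"
  proof (rule sum.cong[OF refl])
    fix j assume j: "j \<in> {..n-k}"
    have p: "pochhammer s k * pochhammer (s + of_nat k) j = pochhammer s (j+k)"
      using pochhammer_product'[of s k j] by (simp add: add.commute)
    have e: "(j+k)-k = j" "n-k-j = n-(j+k)" by auto
    show "of_nat ((n-k) choose j) * (pochhammer s k * pochhammer (s + of_nat k) j) * pochhammer (\<rho> - s + 1) (n - k - j)
      = of_nat ((n-k) choose ((j+k)-k)) * (pochhammer s (j+k) * pochhammer (\<rho> - s + 1) (n - (j+k)))"
      unfolding p e by (simp only: mult_ac)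
  qed
  also have "\<dots> = (\<Sum>m\<le>n. if k \<le> m then of_nat ((n-k) choose (m-k)) * (pochhammer s m * pochhammer (\<rho> - s + 1) (n-m)) else 0)"
    by (rule sum_ge_restrict[OF assms, symmetric])
  finally show ?thesis .
qed

lemma lemmaI:
  fixes s \<rho> :: complex
  shows "(\<Sum>k\<le>n. (-4)^k * of_nat ((n+k) choose (2*k)) * (pochhammer s k * pochhammer (\<rho> + of_nat k + 1) (n-k)))
    = (\<Sum>k\<le>n. (-1)^(n-k) * of_nat ((2*n+1) choose (2*k+1)) * (pochhammer s (n-k) * pochhammer (\<rho> - s + 1) k))"
proof -
  have "(\<Sum>k\<le>n. (-4)^k * of_nat ((n+k) choose (2*k)) * (pochhammer s k * pochhammer (\<rho> + of_nat k + 1) (n-k)))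
      = (\<Sum>k\<le>n. \<Sum>m\<le>n. if k \<le> m then (-4)^k * of_nat ((n+k) choose (2*k)) * of_nat ((n-k) choose (m-k)) * (pochhammer s m * pochhammer (\<rho> - s + 1) (n-m)) else 0)"
    by (rule sum.cong[OF refl], subst poch_expand, simp, simp add: sum_distrib_left, rule sum.cong, auto simp: mult_ac)
  also have "\<dots> = (\<Sum>m\<le>n. \<Sum>k\<le>m. (-4)^k * of_nat ((n+k) choose (2*k)) * of_nat ((n-k) choose (m-k)) * (pochhammer s m * pochhammer (\<rho> - s + 1) (n-m)))"
    by (rule swap_tri)
  also have "\<dots> = (\<Sum>m\<le>n. TT n m * (pochhammer s m * pochhammer (\<rho> - s + 1) (n-m)))"
    unfolding TT_def sum_distrib_right ..
  also have "\<dots> = (\<Sum>m\<le>n. (-1)^m * of_nat ((2*n+1) choose (2*m)) * (pochhammer s m * pochhammer (\<rho> - s + 1) (n-m)))"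
    by (rule sum.cong[OF refl]) (simp add: TT_eq)
  also have "\<dots> = (\<Sum>k\<le>n. (-1)^(n-k) * of_nat ((2*n+1) choose (2*k+1)) * (pochhammer s (n-k) * pochhammer (\<rho> - s + 1) k))"
  proof (rule sum.reindex_bij_witness[of _ "\<lambda>i. n-i" "\<lambda>i. n-i"])
    fix m assume m: "m \<in> {..n}"
    have e: "(2*n+1) - (2*(n-m)+1) = 2*m" "n - (n-m) = m" using m by auto
    have "(2*n+1) choose (2*(n-m)+1) = (2*n+1) choose ((2*n+1) - (2*(n-m)+1))"
      using m by (intro binomial_symmetric) simp
    then have c: "(2*n+1) choose (2*(n-m)+1) = (2*n+1) choose (2*m)" unfolding e .
    show "(-1)^(n - (n-m)) * of_nat ((2*n+1) choose (2*(n-m)+1)) * (pochhammer s (n-(n-m)) * pochhammer (\<rho> - s + 1) (n-m))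
       = (-1)^m * of_nat ((2*n+1) choose (2*m)) * (pochhammer s m * pochhammer (\<rho> - s + 1) (n-m))"
      unfolding c e ..
  qed auto
  finally show ?thesis .
qed


lemma poch_deriv:
  fixes z :: complex
  assumes "z \<notin> \<int>\<^sub>\<le>\<^sub>0"
  shows "((\<lambda>z. pochhammer z m) has_field_derivative pochhammer z m * (Digamma (z + of_nat m) - Digamma z)) (at z)"
proof (induction m)
  case 0
  then show ?case by simp
next
  case (Suc m)
  have nz: "z + of_nat m \<noteq> 0" using assms plus_of_nat_eq_0_imp by blast
  have ext: "(\<lambda>z. pochhammer z (Suc m)) = (\<lambda>z. pochhammer z m * (z + of_nat m))"
    by (simp add: pochhammer_Suc)
  have d: "((\<lambda>z. pochhammer z m * (z + of_nat m)) has_field_derivative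
      pochhammer z m * 1 + pochhammer z m * (Digamma (z + of_nat m) - Digamma z) * (z + of_nat m)) (at z)"
    by (rule DERIV_mult'[OF Suc]) (auto intro!: derivative_eq_intros)
  have dig: "Digamma (z + of_nat (Suc m)) = Digamma (z + of_nat m) + 1 / (z + of_nat m)"
    using Digamma_plus1[OF nz] by (simp add: add_ac)
  have "pochhammer z m * 1 + pochhammer z m * (Digamma (z + of_nat m) - Digamma z) * (z + of_nat m)
     = pochhammer z (Suc m) * (Digamma (z + of_nat (Suc m)) - Digamma z)"
    unfolding dig pochhammer_Suc using nz by (simp add: field_simps)
  then show ?case unfolding ext using d by simp
qed

lemma poch_deriv_shift:
  fixes z c :: complex
  assumes "z + c \<notin> \<int>\<^sub>\<le>\<^sub>0"
  shows "((\<lambda>\<rho>. pochhammer (\<rho> + c) m) has_field_derivative pochhammer (z + c) m * (Digamma (z + c + of_nat m) - Digamma (z + c))) (at z)"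
proof -
  have "((\<lambda>\<rho>. pochhammer (\<rho> + c) m) has_field_derivative pochhammer (z + c) m * (Digamma (z + c + of_nat m) - Digamma (z + c)) * 1) (at z)"
    by (rule DERIV_chain2[where f="\<lambda>w. pochhammer w m" and g="\<lambda>\<rho>. \<rho> + c", OF poch_deriv[OF assms]]) (auto intro!: derivative_eq_intros)
  then show ?thesis by simp
qed

lemma not_neg_int_shift:
  assumes "\<not> neg_int r"
  shows "r + of_nat k + 1 \<notin> \<int>\<^sub>\<le>\<^sub>0"
proof
  assume "r + of_nat k + 1 \<in> \<int>\<^sub>\<le>\<^sub>0"
  then obtain j where h: "r + of_nat k + 1 = - of_nat j" by (elim nonpos_Ints_cases')
  have "r = (r + of_nat k + 1) - (of_nat k + 1)" by simp
  also have "\<dots> = - of_nat (Suc (j + k))" unfolding h by simp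
  finally have "r = - of_nat (Suc (j + k))" .
  then show False using assms unfolding neg_int_def by blast
qed

lemma not_neg_int_shift0:
  assumes "\<not> neg_int s" "s \<noteq> 0"
  shows "s + of_nat k \<notin> \<int>\<^sub>\<le>\<^sub>0"
proof
  assume "s + of_nat k \<in> \<int>\<^sub>\<le>\<^sub>0"
  then obtain j where j: "s + of_nat k = - of_nat j" by (elim nonpos_Ints_cases')
  show False
  proof (cases "j + k")
    case 0
    then show False using j assms by simp
  next
    case (Suc i)
    have "s = (s + of_nat k) - of_nat k" by simp
    also have "\<dots> = - of_nat (j + k)" unfolding j by simp
    finally have "s = - of_nat (Suc i)" unfolding Suc .
    then show False using assms unfolding neg_int_def by blast
  qed
qed


lemma alg3: fixes a A B C D E :: complex
  assumes "a \<noteq> 0" "A \<noteq> 0" "B \<noteq> 0" "C \<noteq> 0" "D \<noteq> 0" "E \<noteq> 0"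
  shows "1/(a*(D/(a*B*C))) = A*C/E*(B/A*(E/D))"
  using assms by (simp add: field_simps)
lemma alg4: fixes a A B C C' E :: complex
  assumes "a \<noteq> 0" "A \<noteq> 0" "B \<noteq> 0" "C \<noteq> 0" "C' \<noteq> 0" "E \<noteq> 0"
  shows "1/(a*(E/(a*B*C'))) = A*C/E*(B/A*(C'/C))"
  using assms by (simp add: field_simps)

lemma coefL:
  assumes k: "k \<le> n" and r: "\<not> neg_int r" and s: "\<not> neg_int s" "s \<noteq> 0" and rs: "\<not> neg_int (r - s)"
  shows "1 / ((of_nat k + s) * cbinom (of_nat k + r) (of_nat k + s))
    = Gamma s * Gamma (r - s + 1) / Gamma (r + of_nat n + 1) * (pochhammer s k * pochhammer (r + of_nat k + 1) (n-k))"
proof -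
  have ns: "s \<notin> \<int>\<^sub>\<le>\<^sub>0" using not_neg_int_shift0[OF s, of 0] by simp
  have nsk: "s + of_nat k \<notin> \<int>\<^sub>\<le>\<^sub>0" using not_neg_int_shift0[OF s] by simp
  have nrs: "r - s + 1 \<notin> \<int>\<^sub>\<le>\<^sub>0" using not_neg_int_shift[OF rs, of 0] by simp
  have nrk: "r + of_nat k + 1 \<notin> \<int>\<^sub>\<le>\<^sub>0" using not_neg_int_shift[OF r] by simp
  have nrn: "r + of_nat n + 1 \<notin> \<int>\<^sub>\<le>\<^sub>0" using not_neg_int_shift[OF r] by simp
  have sk0: "of_nat k + s \<noteq> 0"
  proof
    assume "of_nat k + s = 0"
    then have "s + of_nat k = 0" by (simp add: add.commute)
    then show False using nsk by simp
  qed
  have e1: "of_nat k + r - (of_nat k + s) + 1 = r - s + 1" by simp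
  have e2: "of_nat k + r + 1 = r + of_nat k + 1" by (simp add: add_ac)
  have g1: "Gamma (of_nat k + s + 1) = (of_nat k + s) * Gamma (s + of_nat k)"
    using Gamma_plus1[OF nsk] by (simp add: add_ac)
  have g2: "pochhammer s k = Gamma (s + of_nat k) / Gamma s" by (rule pochhammer_Gamma[OF ns])
  have e3: "r + of_nat k + 1 + of_nat (n-k) = r + of_nat n + 1" using k by (simp add: of_nat_diff)
  have g3: "pochhammer (r + of_nat k + 1) (n-k) = Gamma (r + of_nat n + 1) / Gamma (r + of_nat k + 1)"
    using pochhammer_Gamma[OF nrk, of "n-k"] unfolding e3 .
  have nz: "Gamma s \<noteq> 0" "Gamma (s + of_nat k) \<noteq> 0" "Gamma (r - s + 1) \<noteq> 0" "Gamma (r + of_nat k + 1) \<noteq> 0" "Gamma (r + of_nat n + 1) \<noteq> 0"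
    using ns nsk nrs nrk nrn by (simp_all add: Gamma_nonzero)
  show ?thesis unfolding cbinom_def e1 e2 g1 g2 g3 using nz sk0 by (intro alg3) auto
qed

lemma coefR:
  assumes k: "k \<le> n" and r: "\<not> neg_int r" and s: "\<not> neg_int s" "s \<noteq> 0" and rs: "\<not> neg_int (r - s)"
  shows "1 / ((of_nat (n-k) + s) * cbinom (of_nat n + r) (of_nat (n-k) + s))
    = Gamma s * Gamma (r - s + 1) / Gamma (r + of_nat n + 1) * (pochhammer s (n-k) * pochhammer (r - s + 1) k)"
proof -
  have ns: "s \<notin> \<int>\<^sub>\<le>\<^sub>0" using not_neg_int_shift0[OF s, of 0] by simp
  have nsk: "s + of_nat (n-k) \<notin> \<int>\<^sub>\<le>\<^sub>0" using not_neg_int_shift0[OF s] by simp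
  have nrs: "r - s + 1 \<notin> \<int>\<^sub>\<le>\<^sub>0" using not_neg_int_shift[OF rs, of 0] by simp
  have nrsk: "r - s + 1 + of_nat k \<notin> \<int>\<^sub>\<le>\<^sub>0" using not_neg_int_shift[OF rs, of k] by (simp add: add_ac)
  have nrn: "r + of_nat n + 1 \<notin> \<int>\<^sub>\<le>\<^sub>0" using not_neg_int_shift[OF r] by simp
  have sk0: "of_nat (n-k) + s \<noteq> 0"
  proof
    assume "of_nat (n-k) + s = 0"
    then have "s + of_nat (n-k) = 0" by (simp add: add.commute)
    then show False using nsk by simp
  qed
  have e1: "of_nat n + r - (of_nat (n-k) + s) + 1 = r - s + 1 + of_nat k" using k by (simp add: of_nat_diff)
  have e2: "of_nat n + r + 1 = r + of_nat n + 1" by (simp add: add_ac)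
  have g1: "Gamma (of_nat (n-k) + s + 1) = (of_nat (n-k) + s) * Gamma (s + of_nat (n-k))"
    using Gamma_plus1[OF nsk] by (simp add: add_ac)
  have g2: "pochhammer s (n-k) = Gamma (s + of_nat (n-k)) / Gamma s" by (rule pochhammer_Gamma[OF ns])
  have g3: "pochhammer (r - s + 1) k = Gamma (r - s + 1 + of_nat k) / Gamma (r - s + 1)"
    by (rule pochhammer_Gamma[OF nrs])
  have nz: "Gamma s \<noteq> 0" "Gamma (s + of_nat (n-k)) \<noteq> 0" "Gamma (r - s + 1) \<noteq> 0" "Gamma (r - s + 1 + of_nat k) \<noteq> 0" "Gamma (r + of_nat n + 1) \<noteq> 0"
    using ns nsk nrs nrsk nrn by (simp_all add: Gamma_nonzero)
  show ?thesis unfolding cbinom_def e1 e2 g1 g2 g3 using nz sk0 by (intro alg4) auto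
qed

lemma sign_lemma: "(-1::complex)^(k+1) * 2^(2*k) = - ((-4)^k)"
proof -
  have "(2::complex)^(2*k) = 4^k" by (simp add: power_mult)
  moreover have "(-1::complex)^k * 4^k = (-4)^k" by (simp flip: power_mult_distrib)
  ultimately show ?thesis by simp
qed


theorem theorem31:
  fixes n :: nat and r s :: complex
  assumes "\<not> neg_int r" and "\<not> neg_int s" and "s \<noteq> 0" and "\<not> neg_int (r - s)"
  shows "(\<Sum>k=0..n. (-1)^(k+1) * 2^(2*k) * of_nat ((n+k) choose (n-k))
            / ((of_nat k + s) * cbinom (of_nat k + r) (of_nat k + s)) * Hc (of_nat k + r))
       = (\<Sum>k=0..n. (-1)^(n-k) * of_nat ((2*n+1) choose (2*k+1))
            / ((of_nat (n-k) + s) * cbinom (of_nat n + r) (of_nat (n-k) + s))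
            * (Hc (of_nat k + r - s) - Hc (of_nat n + r) - Hc (r - s)))"
proof -
  define K where "K = Gamma s * Gamma (r - s + 1) / Gamma (r + of_nat n + 1)"
  define cL where "cL k = (-4::complex)^k * of_nat ((n+k) choose (2*k))" for k
  define cR where "cR k = (-1::complex)^(n-k) * of_nat ((2*n+1) choose (2*k+1))" for k
  define pL where "pL k = pochhammer s k * pochhammer (r + of_nat k + 1) (n-k)" for k
  define pR where "pR k = pochhammer s (n-k) * pochhammer (r - s + 1) k" for k
  define dL where "dL k = Digamma (r + of_nat n + 1) - Digamma (r + of_nat k + 1)" for k
  define dR where "dR k = Digamma (r - s + 1 + of_nat k) - Digamma (r - s + 1)" for k
  define HN where "HN = Hc (of_nat n + r)"
  have P: "(\<Sum>k\<le>n. cL k * pL k) = (\<Sum>k\<le>n. cR k * pR k)"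
    using lemmaI[of n s r] unfolding cL_def cR_def pL_def pR_def .
  have D: "(\<Sum>k\<le>n. cL k * (pL k * dL k)) = (\<Sum>k\<le>n. cR k * (pR k * dR k))"
  proof -
    have nr: "r + (of_nat k + 1) \<notin> \<int>\<^sub>\<le>\<^sub>0" for k
      using not_neg_int_shift[OF assms(1), of k] by (simp add: add.assoc)
    have nrs: "r + (1 - s) \<notin> \<int>\<^sub>\<le>\<^sub>0"
    proof -
      have e: "r + (1 - s) = r - s + of_nat 0 + 1" by simp
      show ?thesis unfolding e by (rule not_neg_int_shift[OF assms(4)])
    qed
    have d1: "((\<lambda>\<rho>. \<Sum>k\<le>n. cL k * (pochhammer s k * pochhammer (\<rho> + (of_nat k + 1)) (n-k))) has_field_derivative
       (\<Sum>k\<le>n. cL k * (pochhammer s k * (pochhammer (r + (of_nat k + 1)) (n-k) * (Digamma (r + (of_nat k + 1) + of_nat (n-k)) - Digamma (r + (of_nat k + 1))))))) (at r)"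
      by (intro DERIV_sum DERIV_cmult poch_deriv_shift nr)
    have d2: "((\<lambda>\<rho>. \<Sum>k\<le>n. cR k * (pochhammer s (n-k) * pochhammer (\<rho> + (1 - s)) k)) has_field_derivative
       (\<Sum>k\<le>n. cR k * (pochhammer s (n-k) * (pochhammer (r + (1 - s)) k * (Digamma (r + (1 - s) + of_nat k) - Digamma (r + (1 - s))))))) (at r)"
      by (intro DERIV_sum DERIV_cmult poch_deriv_shift nrs)
    have eqf: "(\<lambda>\<rho>. \<Sum>k\<le>n. cL k * (pochhammer s k * pochhammer (\<rho> + (of_nat k + 1)) (n-k)))
       = (\<lambda>\<rho>. \<Sum>k\<le>n. cR k * (pochhammer s (n-k) * pochhammer (\<rho> + (1 - s)) k))"
    proof
      fix \<rho> :: complex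
      have a1: "\<rho> + (of_nat k + 1) = \<rho> + of_nat k + 1" for k :: nat by (simp add: add.assoc)
      have a2: "\<rho> + (1 - s) = \<rho> - s + 1" by simp
      show "(\<Sum>k\<le>n. cL k * (pochhammer s k * pochhammer (\<rho> + (of_nat k + 1)) (n-k)))
          = (\<Sum>k\<le>n. cR k * (pochhammer s (n-k) * pochhammer (\<rho> + (1 - s)) k))"
        unfolding a1 a2 cL_def cR_def by (rule lemmaI)
    qed
    have U: "(\<Sum>k\<le>n. cL k * (pochhammer s k * (pochhammer (r + (of_nat k + 1)) (n-k) * (Digamma (r + (of_nat k + 1) + of_nat (n-k)) - Digamma (r + (of_nat k + 1))))))
      = (\<Sum>k\<le>n. cR k * (pochhammer s (n-k) * (pochhammer (r + (1 - s)) k * (Digamma (r + (1 - s) + of_nat k) - Digamma (r + (1 - s))))))"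
      using DERIV_unique[OF d1 d2[folded eqf]] .
    have U1: "(\<Sum>k\<le>n. cL k * (pochhammer s k * (pochhammer (r + (of_nat k + 1)) (n-k) * (Digamma (r + (of_nat k + 1) + of_nat (n-k)) - Digamma (r + (of_nat k + 1))))))
      = (\<Sum>k\<le>n. cL k * (pL k * dL k))"
    proof (rule sum.cong[OF refl])
      fix k assume k: "k \<in> {..n}"
      have a1: "r + (of_nat k + 1) = r + of_nat k + 1" by (simp add: add.assoc)
      have a3: "r + of_nat k + 1 + of_nat (n-k) = r + of_nat n + 1" using k by (simp add: of_nat_diff)
      show "cL k * (pochhammer s k * (pochhammer (r + (of_nat k + 1)) (n-k) * (Digamma (r + (of_nat k + 1) + of_nat (n-k)) - Digamma (r + (of_nat k + 1)))))
        = cL k * (pL k * dL k)"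
        unfolding a1 a3 pL_def dL_def by (simp only: mult_ac)
    qed
    have U2: "(\<Sum>k\<le>n. cR k * (pochhammer s (n-k) * (pochhammer (r + (1 - s)) k * (Digamma (r + (1 - s) + of_nat k) - Digamma (r + (1 - s))))))
      = (\<Sum>k\<le>n. cR k * (pR k * dR k))"
    proof (rule sum.cong[OF refl])
      fix k assume k: "k \<in> {..n}"
      have a2: "r + (1 - s) = r - s + 1" by simp
      show "cR k * (pochhammer s (n-k) * (pochhammer (r + (1 - s)) k * (Digamma (r + (1 - s) + of_nat k) - Digamma (r + (1 - s)))))
        = cR k * (pR k * dR k)"
        unfolding a2 pR_def dR_def by (simp only: mult_ac)
    qed
    show ?thesis using U unfolding U1 U2 .
  qed
  have L: "(\<Sum>k=0..n. (-1)^(k+1) * 2^(2*k) * of_nat ((n+k) choose (n-k))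
            / ((of_nat k + s) * cbinom (of_nat k + r) (of_nat k + s)) * Hc (of_nat k + r))
     = (\<Sum>k\<le>n. (-K*HN) * (cL k * pL k) + K * (cL k * (pL k * dL k)))"
    unfolding atLeast0AtMost
  proof (rule sum.cong[OF refl])
    fix k assume k: "k \<in> {..n}"
    then have kn: "k \<le> n" by simp
    have c: "(n+k) choose (n-k) = (n+k) choose (2*k)"
    proof -
      have "(n+k) choose (n-k) = (n+k) choose ((n+k) - (n-k))" using kn by (intro binomial_symmetric) simp
      moreover have "(n+k) - (n-k) = 2*k" using kn by simp
      ultimately show ?thesis by simp
    qed
    have h: "Hc (of_nat k + r) = HN - dL k" unfolding Hc_def HN_def dL_def by (simp add: add_ac)
    have dv: "\<And>a b :: complex. a / b = a * (1 / b)" by simp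
    show "(-1)^(k+1) * 2^(2*k) * of_nat ((n+k) choose (n-k))
            / ((of_nat k + s) * cbinom (of_nat k + r) (of_nat k + s)) * Hc (of_nat k + r)
        = (-K*HN) * (cL k * pL k) + K * (cL k * (pL k * dL k))"
      unfolding dv[of "(-1)^(k+1) * 2^(2*k) * of_nat ((n+k) choose (n-k))"]
      unfolding coefL[OF kn assms(1,2,3,4)] sign_lemma c h K_def[symmetric] pL_def[symmetric] cL_def
      by (simp add: algebra_simps)
  qed
  have R: "(\<Sum>k=0..n. (-1)^(n-k) * of_nat ((2*n+1) choose (2*k+1))
            / ((of_nat (n-k) + s) * cbinom (of_nat n + r) (of_nat (n-k) + s))
            * (Hc (of_nat k + r - s) - Hc (of_nat n + r) - Hc (r - s)))
     = (\<Sum>k\<le>n. (-K*HN) * (cR k * pR k) + K * (cR k * (pR k * dR k)))"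
    unfolding atLeast0AtMost
  proof (rule sum.cong[OF refl])
    fix k assume k: "k \<in> {..n}"
    then have kn: "k \<le> n" by simp
    have e: "of_nat k + r - s + 1 = r - s + 1 + of_nat k" by simp
    have h: "Hc (of_nat k + r - s) - Hc (of_nat n + r) - Hc (r - s) = dR k - HN"
      unfolding Hc_def HN_def dR_def e by simp
    have dv: "\<And>a b :: complex. a / b = a * (1 / b)" by simp
    show "(-1)^(n-k) * of_nat ((2*n+1) choose (2*k+1))
            / ((of_nat (n-k) + s) * cbinom (of_nat n + r) (of_nat (n-k) + s))
            * (Hc (of_nat k + r - s) - Hc (of_nat n + r) - Hc (r - s))
        = (-K*HN) * (cR k * pR k) + K * (cR k * (pR k * dR k))"
      unfolding dv[of "(-1)^(n-k) * of_nat ((2*n+1) choose (2*k+1))"]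
      unfolding coefR[OF kn assms(1,2,3,4)] h K_def[symmetric] pR_def[symmetric] cR_def
      by (simp add: algebra_simps)
  qed
  show ?thesis unfolding L R sum.distrib sum_distrib_left[symmetric] P D ..
qed

end
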